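(* Let $\mathcal W,\mathcal U,\mathcal V$ be finite, $\Phi_{U|W}$ a codebook distribution and $\Phi_{V|W,U}$ a memoryless channel, with $\Phi_{V|W}=\sum_u\Phi_{U|W}\Phi_{V|W,U}$. Let $\mathcal B^{(n)}=\{u^n(w^n,j):w^n\in\mathcal W^n, j\in[2^{nR}]\}$ have independent entries with $u^n(w^n,j)\sim\prod_t\Phi_{U|W}(\cdot|w_t)$, and for each $w^n$ define $P_{V^n|W^n=w^n}(v^n)=2^{-nR}\sum_{j}\prod_{t=1}^n\Phi_{V|W,U}(v_t|w_t,u_t(w^n,j))$ and $Q_{V^n|W^n=w^n}(v^n)=\prod_t\Phi_{V|W}(v_t|w_t)$. Let $(\gamma_n)$ satisfy $\gamma_n\sqrt n\to\infty$. Then there exists a sequence $\epsilon_n\to0$, depending only on $\Phi_{U,V|W}$ and $(\gamma_n)$, such that for every $n$ and every $w^n\in\mathcal W^n$ with $R>I_{\mathbb P\Phi}(U;V|W)+\gamma_n$, $$\mathbf E\|P_{V^n|W^n=w^n}-Q_{V^n|W^n=w^n}\|_{TV}<\epsilon_n.$$ If $\gamma_n=\gamma>0$ is constant, $\epsilon_n$ can be chosen to decay exponentially in $n$.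
   Context: The empirical distribution of $w^n$ is $\mathbb P_{w^n}(w)=\frac1n\sum_t\mathbf 1(w_t=w)$; $I_{\mathbb P\Phi}(U;V|W)$ is computed under $\mathbb P_{w^n}(w)\Phi_{U,V|W}(u,v|w)$. Expectation over the random codebook; total variation is half the $\ell_1$ distance; logarithms base 2. *)

theory Defs
  imports "HOL-Probability.Probability"
begin

definition words :: "nat \<Rightarrow> 'a list set" where
  "words n = {xs. length xs = n}"

definition chanVW :: "('w \<Rightarrow> 'u pmf) \<Rightarrow> ('w \<Rightarrow> 'u \<Rightarrow> 'v pmf) \<Rightarrow> 'w \<Rightarrow> 'v pmf" where
  "chanVW PhiU PhiV w = bind_pmf (PhiU w) (PhiV w)"

definition empdist :: "'w list \<Rightarrow> 'w \<Rightarrow> real" where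
  "empdist ws w = real (card {t. t < length ws \<and> ws ! t = w}) / real (length ws)"

definition condMI :: "('w::finite \<Rightarrow> real) \<Rightarrow> ('w \<Rightarrow> 'u::finite pmf) \<Rightarrow> ('w \<Rightarrow> 'u \<Rightarrow> 'v::finite pmf) \<Rightarrow> real" where
  "condMI P PhiU PhiV =
     (\<Sum>w\<in>UNIV. \<Sum>u\<in>UNIV. \<Sum>v\<in>UNIV.
        (let p = P w * pmf (PhiU w) u * pmf (PhiV w u) v in
         if p = 0 then 0
         else p * log 2 (pmf (PhiV w u) v / pmf (chanVW PhiU PhiV w) v)))"

text \<open>Codebook size: [2^{nR}] read as {0..< ceiling(2^{nR})}.\<close>
definition cbsize :: "nat \<Rightarrow> real \<Rightarrow> nat" where
  "cbsize n R = nat \<lceil>2 powr (real n * R)\<rceil>"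

definition codebook_pmf :: "('w::finite \<Rightarrow> 'u pmf) \<Rightarrow> nat \<Rightarrow> real \<Rightarrow> ('w list \<times> nat \<Rightarrow> nat \<Rightarrow> 'u) pmf" where
  "codebook_pmf PhiU n R =
     Pi_pmf (words n \<times> {..<cbsize n R}) undefined
       (\<lambda>(ws, j). Pi_pmf {..<n} undefined (\<lambda>t. PhiU (ws ! t)))"

definition outP :: "('w \<Rightarrow> 'u \<Rightarrow> 'v pmf) \<Rightarrow> nat \<Rightarrow> real \<Rightarrow> ('w list \<times> nat \<Rightarrow> nat \<Rightarrow> 'u)
                     \<Rightarrow> 'w list \<Rightarrow> 'v list \<Rightarrow> real" where
  "outP PhiV n R C ws vs =
     (1 / real (cbsize n R)) * (\<Sum>j<cbsize n R. \<Prod>t<n. pmf (PhiV (ws ! t) (C (ws, j) t)) (vs ! t))"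

definition outQ :: "('w \<Rightarrow> 'u pmf) \<Rightarrow> ('w \<Rightarrow> 'u \<Rightarrow> 'v pmf) \<Rightarrow> nat \<Rightarrow> 'w list \<Rightarrow> 'v list \<Rightarrow> real" where
  "outQ PhiU PhiV n ws vs = (\<Prod>t<n. pmf (chanVW PhiU PhiV (ws ! t)) (vs ! t))"

definition tv_dist :: "nat \<Rightarrow> ('v list \<Rightarrow> real) \<Rightarrow> ('v list \<Rightarrow> real) \<Rightarrow> real" where
  "tv_dist n P Q = (1/2) * (\<Sum>vs\<in>words n. \<bar>P vs - Q vs\<bar>)"

definition exp_tv :: "('w::finite \<Rightarrow> 'u pmf) \<Rightarrow> ('w \<Rightarrow> 'u \<Rightarrow> 'v pmf) \<Rightarrow> nat \<Rightarrow> real \<Rightarrow> 'w list \<Rightarrow> real" where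
  "exp_tv PhiU PhiV n R ws =
     measure_pmf.expectation (codebook_pmf PhiU n R)
       (\<lambda>C. tv_dist n (outP PhiV n R C ws) (outQ PhiU PhiV n ws))"

end

theory Submission
  imports Defs
begin


lemma finite_words[simp]: "finite (words n :: 'a::finite list set)"
proof -
  have "words n = {xs::'a list. set xs \<subseteq> UNIV \<and> length xs = n}" by (auto simp: words_def)
  thus ?thesis using finite_lists_length_eq[of "UNIV::'a set" n] by simp
qed

lemma words_Suc: "words (Suc n) = (\<lambda>(xs,x). xs @ [x]) ` (words n \<times> UNIV)"
proof (intro equalityI subsetI)
  fix ys :: "'a list" assume "ys \<in> words (Suc n)"
  hence l: "length ys = Suc n" by (simp add: words_def)
  then obtain xs x where "ys = xs @ [x]" by (metis length_Suc_conv_rev)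
  with l show "ys \<in> (\<lambda>(xs,x). xs @ [x]) ` (words n \<times> UNIV)" by (auto simp: words_def)
qed (auto simp: words_def)

lemma sum_words_prod:
  fixes f :: "nat \<Rightarrow> 'a::finite \<Rightarrow> 'b::comm_semiring_1"
  shows "(\<Sum>xs\<in>words n. \<Prod>t<n. f t (xs!t)) = (\<Prod>t<n. \<Sum>x\<in>UNIV. f t x)"
proof (induction n)
  case 0 thus ?case by (simp add: words_def)
next
  case (Suc n)
  have inj: "inj_on (\<lambda>(xs,x). xs @ [x]) (words n \<times> (UNIV::'a set))"
    by (auto simp: inj_on_def)
  have "(\<Sum>xs\<in>words (Suc n). \<Prod>t<Suc n. f t (xs!t))
      = (\<Sum>(xs,x)\<in>words n \<times> (UNIV::'a set). \<Prod>t<Suc n. f t ((xs@[x])!t))"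
    unfolding words_Suc by (subst sum.reindex[OF inj]) (simp add: case_prod_unfold)
  also have "\<dots> = (\<Sum>(xs,x)\<in>words n \<times> (UNIV::'a set). (\<Prod>t<n. f t (xs!t)) * f n x)"
  proof -
    have *: "(\<Prod>t<Suc n. f t ((xs@[x])!t)) = (\<Prod>t<n. f t (xs!t)) * f n x"
      if "xs \<in> words n" for xs :: "'a list" and x :: 'a
    proof -
      have l: "length xs = n" using that by (simp add: words_def)
      have "(\<Prod>t<n. f t ((xs@[x])!t)) = (\<Prod>t<n. f t (xs!t))"
        by (intro prod.cong refl) (simp add: nth_append l)
      moreover have "(xs@[x])!n = x" by (simp add: l[symmetric])
      ultimately show ?thesis by simp
    qed
    show ?thesis by (intro sum.cong refl) (auto simp del: prod.lessThan_Suc simp: *)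
  qed
  also have "\<dots> = (\<Sum>xs\<in>words n. \<Prod>t<n. f t (xs!t)) * (\<Sum>x\<in>UNIV. f n x)"
    by (simp add: sum.cartesian_product[symmetric] sum_product)
  also have "\<dots> = (\<Prod>t<Suc n. \<Sum>x\<in>UNIV. f t x)" using Suc by simp
  finally show ?case .
qed

lemma finite_set_Pi_pmf:
  assumes "finite A" "\<And>x. x \<in> A \<Longrightarrow> finite (set_pmf (p x))"
  shows "finite (set_pmf (Pi_pmf A d p))"
  by (rule finite_subset[OF set_Pi_pmf_subset'[OF assms(1)]]) (use assms in auto)

lemma finite_pmf_fin[simp]: "finite (set_pmf (p :: 'a::finite pmf))" by simp

lemma expectation_Pi_list:
  fixes p :: "nat \<Rightarrow> 'a::finite pmf" and g :: "'a list \<Rightarrow> real"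
  shows "measure_pmf.expectation (Pi_pmf {..<n} d p) (\<lambda>u. g (map u [0..<n]))
       = (\<Sum>us\<in>words n. (\<Prod>t<n. pmf (p t) (us!t)) * g us)"
proof -
  let ?S = "PiE_dflt {..<n} d (\<lambda>_. UNIV::'a set)"
  have fS: "finite ?S" by (intro finite_PiE_dflt) auto
  have "measure_pmf.expectation (Pi_pmf {..<n} d p) (\<lambda>u. g (map u [0..<n]))
      = (\<Sum>u\<in>?S. g (map u [0..<n]) * pmf (Pi_pmf {..<n} d p) u)"
    by (rule integral_measure_pmf_real[OF fS])
       (use set_Pi_pmf_subset'[of "{..<n}" d p] in \<open>auto simp: PiE_dflt_def\<close>)
  also have "\<dots> = (\<Sum>u\<in>?S. (\<Prod>t<n. pmf (p t) (map u [0..<n] ! t)) * g (map u [0..<n]))"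
    by (intro sum.cong refl) (auto simp: pmf_Pi PiE_dflt_def)
  also have "\<dots> = (\<Sum>us\<in>words n. (\<Prod>t<n. pmf (p t) (us!t)) * g us)"
  proof (rule sum.reindex_bij_betw)
    show "bij_betw (\<lambda>u. map u [0..<n]) ?S (words n)"
    proof (rule bij_betwI[where g = "\<lambda>us t. if t < n then us!t else d"])
      show "(\<lambda>u. map u [0..<n]) \<in> ?S \<rightarrow> words n" by (auto simp: words_def)
      show "(\<lambda>us t. if t < n then us!t else d) \<in> words n \<rightarrow> ?S" by (auto simp: PiE_dflt_def)
      show "(\<lambda>t. if t < n then map x [0..<n] ! t else d) = x" if "x \<in> ?S" for x
        using that by (auto simp: PiE_dflt_def)
      show "map (\<lambda>t. if t < n then y ! t else d) [0..<n] = y" if "y \<in> words n" for y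
        using that by (auto simp: words_def intro!: nth_equalityI)
    qed
  qed
  finally show ?thesis .
qed



lemma codebook_fin: fixes PhiU :: "'w::finite \<Rightarrow> 'u::finite pmf" shows "finite (set_pmf (codebook_pmf PhiU n R))"
  unfolding codebook_pmf_def
  by (intro finite_set_Pi_pmf) (auto intro!: finite_set_Pi_pmf simp: words_def[symmetric])

lemma integrable_codebook[simp]: fixes PhiU :: "'w::finite \<Rightarrow> 'u::finite pmf" shows "integrable (measure_pmf (codebook_pmf PhiU n R)) (f :: _ \<Rightarrow> real)"
  by (rule integrable_measure_pmf_finite[OF codebook_fin])

lemma codebook_component:
  assumes "ws \<in> words n" "j < cbsize n R"
  shows "map_pmf (\<lambda>C. C (ws,j)) (codebook_pmf PhiU n R) = Pi_pmf {..<n} undefined (\<lambda>t. PhiU (ws!t))"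
  unfolding codebook_pmf_def using assms
  by (subst Pi_pmf_component) (auto)

lemma codebook_E1:
  fixes g :: "'u::finite list \<Rightarrow> real" and PhiU :: "'w::finite \<Rightarrow> 'u pmf"
  assumes "ws \<in> words n" "j < cbsize n R"
  shows "measure_pmf.expectation (codebook_pmf PhiU n R) (\<lambda>C. g (map (C (ws,j)) [0..<n]))
     = (\<Sum>us\<in>words n. (\<Prod>t<n. pmf (PhiU (ws!t)) (us!t)) * g us)"
proof -
  have "measure_pmf.expectation (codebook_pmf PhiU n R) (\<lambda>C. g (map (C (ws,j)) [0..<n]))
     = measure_pmf.expectation (map_pmf (\<lambda>C. C (ws,j)) (codebook_pmf PhiU n R)) (\<lambda>u. g (map u [0..<n]))"
    by simp
  also have "\<dots> = (\<Sum>us\<in>words n. (\<Prod>t<n. pmf (PhiU (ws!t)) (us!t)) * g us)"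
    unfolding codebook_component[OF assms] by (rule expectation_Pi_list)
  finally show ?thesis .
qed

lemma codebook_E2:
  fixes g h :: "'u::finite list \<Rightarrow> real" and PhiU :: "'w::finite \<Rightarrow> 'u pmf"
  assumes "ws \<in> words n" "j < cbsize n R" "k < cbsize n R" "j \<noteq> k"
    and g0: "\<And>us. g us \<ge> 0" and h0: "\<And>us. h us \<ge> 0"
  shows "measure_pmf.expectation (codebook_pmf PhiU n R)
           (\<lambda>C. g (map (C (ws,j)) [0..<n]) * h (map (C (ws,k)) [0..<n]))
     = (\<Sum>us\<in>words n. (\<Prod>t<n. pmf (PhiU (ws!t)) (us!t)) * g us) *
       (\<Sum>us\<in>words n. (\<Prod>t<n. pmf (PhiU (ws!t)) (us!t)) * h us)"
proof -
  define A where "A = (words n :: 'w list set) \<times> {..<cbsize n R}"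
  define p where "p = (\<lambda>(ws::'w list, j::nat). Pi_pmf {..<n} undefined (\<lambda>t. PhiU (ws!t)))"
  define f where "f = (\<lambda>x y. if x = (ws,j) then g (map y [0..<n])
                             else if x = (ws,k) then h (map y [0..<n]) else (1::real))"
  have fA: "finite A" by (simp add: A_def)
  have cb: "codebook_pmf PhiU n R = Pi_pmf A undefined p"
    by (simp add: codebook_pmf_def A_def p_def)
  have inA: "(ws,j) \<in> A" "(ws,k) \<in> A" using assms by (auto simp: A_def)
  have prod_eq: "(\<Prod>x\<in>A. f x (C x)) = g (map (C (ws,j)) [0..<n]) * h (map (C (ws,k)) [0..<n])" for C
  proof -
    have "(\<Prod>x\<in>A. f x (C x)) = (\<Prod>x\<in>{(ws,j),(ws,k)}. f x (C x))"
      by (rule prod.mono_neutral_right[OF fA]) (use inA in \<open>auto simp: f_def\<close>)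
    thus ?thesis using assms(4) by (simp add: f_def)
  qed
  have "measure_pmf.expectation (Pi_pmf A undefined p) (\<lambda>C. \<Prod>x\<in>A. f x (C x))
      = (\<Prod>x\<in>A. measure_pmf.expectation (p x) (f x))"
    by (rule expectation_prod_Pi_pmf[OF fA])
       (auto simp: p_def f_def g0 h0 intro!: integrable_measure_pmf_finite finite_set_Pi_pmf)
  also have "\<dots> = (\<Prod>x\<in>{(ws,j),(ws,k)}. measure_pmf.expectation (p x) (f x))"
    by (rule prod.mono_neutral_right[OF fA]) (use inA in \<open>auto simp: f_def\<close>)
  also have "\<dots> = measure_pmf.expectation (p (ws,j)) (f (ws,j)) * measure_pmf.expectation (p (ws,k)) (f (ws,k))"
    using assms(4) by simp
  also have "\<dots> = (\<Sum>us\<in>words n. (\<Prod>t<n. pmf (PhiU (ws!t)) (us!t)) * g us) *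
       (\<Sum>us\<in>words n. (\<Prod>t<n. pmf (PhiU (ws!t)) (us!t)) * h us)"
    using assms(4) by (simp add: p_def f_def expectation_Pi_list)
  finally show ?thesis unfolding cb prod_eq .
qed



definition PUl :: "('w \<Rightarrow> 'u pmf) \<Rightarrow> 'w list \<Rightarrow> 'u list \<Rightarrow> real" where
  "PUl PhiU ws us = (\<Prod>t<length ws. pmf (PhiU (ws!t)) (us!t))"

definition PVl :: "('w \<Rightarrow> 'u \<Rightarrow> 'v pmf) \<Rightarrow> 'w list \<Rightarrow> 'u list \<Rightarrow> 'v list \<Rightarrow> real" where
  "PVl PhiV ws us vs = (\<Prod>t<length ws. pmf (PhiV (ws!t) (us!t)) (vs!t))"

lemma PUl_nonneg: "PUl PhiU ws us \<ge> 0" by (simp add: PUl_def prod_nonneg)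
lemma PVl_nonneg: "PVl PhiV ws us vs \<ge> 0" by (simp add: PVl_def prod_nonneg)

lemma chan_sum:
  fixes PhiU :: "'w \<Rightarrow> 'u::finite pmf"
  shows "(\<Sum>a\<in>UNIV. pmf (PhiU w) a * pmf (PhiV w a) b) = pmf (chanVW PhiU PhiV w) b"
  by (simp add: chanVW_def pmf_bind integral_measure_pmf_real[of UNIV] mult.commute)

lemma sum_PUl:
  fixes PhiU :: "'w \<Rightarrow> 'u::finite pmf"
  shows "(\<Sum>us\<in>words (length ws). PUl PhiU ws us) = 1"
  unfolding PUl_def by (subst sum_words_prod) (simp add: sum_pmf_eq_1)

lemma Q_eq:
  fixes PhiU :: "'w \<Rightarrow> 'u::finite pmf"
  shows "(\<Sum>us\<in>words (length ws). PUl PhiU ws us * PVl PhiV ws us vs) = outQ PhiU PhiV (length ws) ws vs"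
proof -
  have "(\<Sum>us\<in>words (length ws). PUl PhiU ws us * PVl PhiV ws us vs)
     = (\<Sum>us\<in>words (length ws). \<Prod>t<length ws. pmf (PhiU (ws!t)) (us!t) * pmf (PhiV (ws!t) (us!t)) (vs!t))"
    by (simp add: PUl_def PVl_def prod.distrib)
  also have "\<dots> = (\<Prod>t<length ws. \<Sum>a\<in>UNIV. pmf (PhiU (ws!t)) a * pmf (PhiV (ws!t) a) (vs!t))"
    by (rule sum_words_prod)
  also have "\<dots> = outQ PhiU PhiV (length ws) ws vs" by (simp add: outQ_def chan_sum)
  finally show ?thesis .
qed

lemma sum_outQ:
  fixes PhiU :: "'w \<Rightarrow> 'u::finite pmf" and PhiV :: "'w \<Rightarrow> 'u \<Rightarrow> 'v::finite pmf"
  shows "(\<Sum>vs\<in>words (length ws). outQ PhiU PhiV (length ws) ws vs) = 1"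
  unfolding outQ_def by (subst sum_words_prod) (simp add: sum_pmf_eq_1)

lemma outQ_nonneg: "outQ PhiU PhiV n ws vs \<ge> 0" by (simp add: outQ_def prod_nonneg)

lemma cbsize_ge: "real (cbsize n R) \<ge> 2 powr (real n * R)"
proof -
  have "2 powr (real n * R) \<le> of_int \<lceil>2 powr (real n * R)\<rceil>" by (rule le_of_int_ceiling)
  also have "\<dots> = real (cbsize n R)" unfolding cbsize_def
    using ceiling_mono[of 0 "2 powr (real n * R)"] by simp
  finally show ?thesis .
qed

lemma cbsize_ge1: "cbsize n R \<ge> 1"
proof -
  have "0 < real (cbsize n R)" using cbsize_ge[of n R] by (smt (verit) powr_gt_zero)
  thus ?thesis by simp
qed



lemma Y_bound:
  fixes PhiU :: "'w::finite \<Rightarrow> 'u::finite pmf" and a :: "'u list \<Rightarrow> real" and ws :: "'w list" and R \<theta> q :: real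
  defines "n \<equiv> length ws"
  defines "M \<equiv> cbsize n R"
  defines "\<mu> \<equiv> (\<Sum>us\<in>words n. PUl PhiU ws us * a us)"
  assumes a0: "\<And>us. 0 \<le> a us" and aB: "\<And>us. a us \<le> \<theta> * q" and mq: "\<mu> \<le> q"
    and th: "\<theta> \<ge> 0" and q0: "q \<ge> 0"
  shows "measure_pmf.expectation (codebook_pmf PhiU n R)
           (\<lambda>C. \<bar>(1 / real M) * (\<Sum>j<M. a (map (C (ws,j)) [0..<n]) - \<mu>)\<bar>) \<le> q * sqrt (\<theta> / real M)"
proof -
  have ws: "ws \<in> words n" by (simp add: n_def words_def)
  have M1: "M \<ge> 1" unfolding M_def by (rule cbsize_ge1)
  define X where "X = (\<lambda>(j::nat) C. a (map (C (ws,j)) [0..<n]))"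
  define Y where "Y = (\<lambda>C. (1 / real M) * (\<Sum>j<M. X j C - \<mu>))"
  define S2 where "S2 = (\<Sum>us\<in>words n. PUl PhiU ws us * (a us)^2)"
  let ?E = "measure_pmf.expectation (codebook_pmf PhiU n R)"
  have PU: "PUl PhiU ws us = (\<Prod>t<n. pmf (PhiU (ws!t)) (us!t))" for us
    by (simp add: PUl_def n_def)
  have EX: "?E (X j) = \<mu>" if "j < M" for j
    unfolding X_def \<mu>_def PU using codebook_E1[OF ws that[unfolded M_def], where g=a and PhiU=PhiU] by simp
  have EXX: "?E (\<lambda>C. X j C * X k C) = (if j = k then S2 else \<mu> * \<mu>)" if "j < M" "k < M" for j k
  proof (cases "j = k")
    case True
    thus ?thesis unfolding X_def S2_def PU using codebook_E1[OF ws that(1)[unfolded M_def], where g="\<lambda>us. (a us)^2" and PhiU=PhiU]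
      by (simp add: power2_eq_square)
  next
    case False
    thus ?thesis unfolding X_def \<mu>_def PU using codebook_E2[OF ws that[unfolded M_def] False, where g=a and h=a and PhiU=PhiU] a0
      by simp
  qed
  have cov: "?E (\<lambda>C. (X j C - \<mu>) * (X k C - \<mu>)) = (if j = k then S2 - \<mu>^2 else 0)"
    if "j < M" "k < M" for j k
  proof -
    have "?E (\<lambda>C. (X j C - \<mu>) * (X k C - \<mu>)) = ?E (\<lambda>C. X j C * X k C) - \<mu> * ?E (X k) - \<mu> * ?E (X j) + \<mu> * \<mu>"
      by (simp add: algebra_simps)
    thus ?thesis using EX EXX that by (simp add: power2_eq_square)
  qed
  have EY2: "?E (\<lambda>C. (Y C)^2) = (S2 - \<mu>^2) / real M"
  proof -
    have "?E (\<lambda>C. (Y C)^2) = ?E (\<lambda>C. (1 / real M)^2 * (\<Sum>j<M. \<Sum>k<M. (X j C - \<mu>) * (X k C - \<mu>)))"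
      unfolding Y_def by (simp add: power_mult_distrib power2_eq_square sum_product)
    also have "\<dots> = (1 / real M)^2 * (\<Sum>j<M. \<Sum>k<M. ?E (\<lambda>C. (X j C - \<mu>) * (X k C - \<mu>)))"
      by (simp add: Bochner_Integration.integral_sum)
    also have "\<dots> = (1 / real M)^2 * (\<Sum>j<M. \<Sum>k<M. if j = k then S2 - \<mu>^2 else 0)"
      by (intro arg_cong[where f = "\<lambda>x. _ * x"] sum.cong refl) (simp add: cov)
    also have "\<dots> = (S2 - \<mu>^2) / real M"
      using M1 by (simp add: power2_eq_square field_simps)
    finally show ?thesis .
  qed
  have S2b: "S2 \<le> \<theta> * q * \<mu>"
  proof -
    have "S2 \<le> (\<Sum>us\<in>words n. PUl PhiU ws us * ((\<theta> * q) * a us))"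
      unfolding S2_def
      by (intro sum_mono mult_left_mono) (auto simp: power2_eq_square PUl_nonneg a0 aB mult_right_mono)
    thus ?thesis by (simp add: \<mu>_def sum_distrib_left algebra_simps)
  qed
  have \<mu>0: "\<mu> \<ge> 0" unfolding \<mu>_def by (intro sum_nonneg mult_nonneg_nonneg PUl_nonneg a0)
  have EY2b: "?E (\<lambda>C. (Y C)^2) \<le> (q * sqrt (\<theta> / real M))^2"
  proof -
    have "?E (\<lambda>C. (Y C)^2) \<le> S2 / real M" using EY2 M1 by (simp add: divide_right_mono)
    also have "\<dots> \<le> \<theta> * q * q / real M"
    proof -
      have "\<theta> * q * \<mu> \<le> \<theta> * q * q" using mq th q0 by (intro mult_left_mono) auto
      thus ?thesis using S2b M1 by (intro divide_right_mono) auto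
    qed
    also have "\<dots> = (q * sqrt (\<theta> / real M))^2"
    proof -
      have "sqrt (\<theta> / real M) * sqrt (\<theta> / real M) = \<theta> / real M" using th M1 by simp
      hence "(q * sqrt (\<theta> / real M))^2 = q * q * (\<theta> / real M)"
        by (simp add: power2_eq_square algebra_simps) blast
      thus ?thesis by simp

    qed
    finally show ?thesis .
  qed
  show ?thesis
  proof (cases "q * sqrt (\<theta> / real M) = 0")
    case True
    hence "?E (\<lambda>C. (Y C)^2) \<le> 0" using EY2b by (metis zero_power2)
    moreover have "?E (\<lambda>C. (Y C)^2) \<ge> 0" by simp
    ultimately have "?E (\<lambda>C. (Y C)^2) = 0" by simp
    hence "AE C in measure_pmf (codebook_pmf PhiU n R). (Y C)^2 = 0"
      by (subst (asm) integral_nonneg_eq_0_iff_AE) auto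
    hence "?E (\<lambda>C. \<bar>Y C\<bar>) = ?E (\<lambda>C. 0)" by (intro integral_cong_AE) auto
    thus ?thesis using True q0 th by (auto simp: Y_def X_def)
  next
    case False
    define c where "c = q * sqrt (\<theta> / real M)"
    have c0: "c > 0" using False th q0 M1 unfolding c_def by (simp add: less_le)
    have pw: "\<bar>Y C\<bar> \<le> ((Y C)^2 / c + c) / 2" for C
    proof -
      have "0 \<le> (\<bar>Y C\<bar> - c)^2" by simp
      hence "2 * c * \<bar>Y C\<bar> \<le> (Y C)^2 + c^2" by (simp add: power2_eq_square algebra_simps)
      thus ?thesis using c0 by (simp add: field_simps power2_eq_square)
    qed
    have "?E (\<lambda>C. \<bar>Y C\<bar>) \<le> ?E (\<lambda>C. ((Y C)^2 / c + c) / 2)"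
      by (intro integral_mono integrable_codebook pw)
    also have "\<dots> = (?E (\<lambda>C. (Y C)^2) / c + c) / 2" by simp
    also have "\<dots> \<le> (c^2 / c + c) / 2"
      using EY2b c0 unfolding c_def[symmetric] by (intro divide_right_mono add_right_mono) (auto intro: divide_right_mono)
    also have "\<dots> = c" using c0 by (simp add: power2_eq_square)
    finally show ?thesis by (simp add: Y_def X_def c_def)
  qed
qed



definition Aa where "Aa PhiU PhiV ws \<theta> us vs =
  (if PVl PhiV ws us vs \<le> \<theta> * outQ PhiU PhiV (length ws) ws vs then PVl PhiV ws us vs else 0)"
definition Bb where "Bb PhiU PhiV ws \<theta> us vs = PVl PhiV ws us vs - Aa PhiU PhiV ws \<theta> us vs"

lemma outP_eq:
  assumes "n = length ws"
  shows "outP PhiV n R C ws vs = (1 / real (cbsize n R)) * (\<Sum>j<cbsize n R. PVl PhiV ws (map (C (ws,j)) [0..<n]) vs)"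
  unfolding outP_def PVl_def assms by (intro arg_cong[where f="\<lambda>x. _ * x"] sum.cong prod.cong refl) auto

lemma TV_bound:
  fixes PhiU :: "'w::finite \<Rightarrow> 'u::finite pmf" and PhiV :: "'w \<Rightarrow> 'u \<Rightarrow> 'v::finite pmf"
    and ws :: "'w list" and R \<theta> :: real
  defines "n \<equiv> length ws"
  assumes th: "\<theta> \<ge> 0"
  shows "exp_tv PhiU PhiV n R ws \<le>
     (\<Sum>vs\<in>words n. \<Sum>us\<in>words n. PUl PhiU ws us * Bb PhiU PhiV ws \<theta> us vs)
     + sqrt (\<theta> / real (cbsize n R)) / 2"
proof -
  define M where "M = cbsize n R"
  have M1: "M \<ge> 1" unfolding M_def by (rule cbsize_ge1)
  have ws: "ws \<in> words n" by (simp add: n_def words_def)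
  let ?E = "measure_pmf.expectation (codebook_pmf PhiU n R)"
  have PU: "PUl PhiU ws us = (\<Prod>t<n. pmf (PhiU (ws!t)) (us!t))" for us
    by (simp add: PUl_def n_def)
  let ?Q = "outQ PhiU PhiV n ws"
  define a where "a = (\<lambda>vs us. Aa PhiU PhiV ws \<theta> us vs)"
  define b where "b = (\<lambda>vs us. Bb PhiU PhiV ws \<theta> us vs)"
  define \<mu> where "\<mu> = (\<lambda>vs. \<Sum>us\<in>words n. PUl PhiU ws us * a vs us)"
  define \<beta> where "\<beta> = (\<lambda>vs. \<Sum>us\<in>words n. PUl PhiU ws us * b vs us)"
  have a0: "a vs us \<ge> 0" for vs us by (simp add: a_def Aa_def PVl_nonneg)
  have b0: "b vs us \<ge> 0" for vs us by (simp add: b_def Bb_def Aa_def PVl_nonneg)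
  have aB: "a vs us \<le> \<theta> * ?Q vs" for vs us by (auto simp: a_def Aa_def n_def th outQ_nonneg)
  have \<beta>0: "\<beta> vs \<ge> 0" for vs unfolding \<beta>_def by (intro sum_nonneg mult_nonneg_nonneg PUl_nonneg b0)
  have \<mu>0: "\<mu> vs \<ge> 0" for vs unfolding \<mu>_def by (intro sum_nonneg mult_nonneg_nonneg PUl_nonneg a0)
  have Qsplit: "?Q vs = \<mu> vs + \<beta> vs" for vs
  proof -
    have "?Q vs = (\<Sum>us\<in>words n. PUl PhiU ws us * PVl PhiV ws us vs)"
      using Q_eq[of PhiU ws PhiV vs] by (simp add: n_def)
    also have "\<dots> = \<mu> vs + \<beta> vs"
      by (simp add: \<mu>_def \<beta>_def a_def b_def Bb_def sum.distrib[symmetric] algebra_simps)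
    finally show ?thesis .
  qed
  have pw: "\<bar>outP PhiV n R C ws vs - ?Q vs\<bar> \<le>
      \<bar>(1 / real M) * (\<Sum>j<M. a vs (map (C (ws,j)) [0..<n]) - \<mu> vs)\<bar>
      + (1 / real M) * (\<Sum>j<M. b vs (map (C (ws,j)) [0..<n])) + \<beta> vs" for C vs
  proof -
    have "outP PhiV n R C ws vs - ?Q vs =
       (1 / real M) * (\<Sum>j<M. a vs (map (C (ws,j)) [0..<n]) - \<mu> vs)
      + ((1 / real M) * (\<Sum>j<M. b vs (map (C (ws,j)) [0..<n])) - \<beta> vs)"
      using M1 unfolding outP_eq[OF n_def[THEN meta_eq_to_obj_eq]] M_def[symmetric] Qsplit
      by (simp add: a_def b_def Bb_def sum.distrib sum_subtractf field_simps)
    moreover have "(1 / real M) * (\<Sum>j<M. b vs (map (C (ws,j)) [0..<n])) \<ge> 0"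
      by (intro mult_nonneg_nonneg sum_nonneg b0) auto
    ultimately show ?thesis using \<beta>0[of vs] by linarith
  qed
  have Eb: "?E (\<lambda>C. (1 / real M) * (\<Sum>j<M. b vs (map (C (ws,j)) [0..<n]))) = \<beta> vs" for vs
  proof -
    have "?E (\<lambda>C. (1 / real M) * (\<Sum>j<M. b vs (map (C (ws,j)) [0..<n])))
        = (1 / real M) * (\<Sum>j<M. ?E (\<lambda>C. b vs (map (C (ws,j)) [0..<n])))"
      by (simp add: Bochner_Integration.integral_sum)
    also have "\<dots> = (1 / real M) * (\<Sum>j<M. \<beta> vs)"
      by (intro arg_cong[where f="\<lambda>x. _ * x"] sum.cong refl)
         (simp add: codebook_E1[OF ws, where PhiU=PhiU] M_def \<beta>_def PU)
    also have "\<dots> = \<beta> vs" using M1 by simp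
    finally show ?thesis .
  qed
  have EY: "?E (\<lambda>C. \<bar>(1 / real M) * (\<Sum>j<M. a vs (map (C (ws,j)) [0..<n]) - \<mu> vs)\<bar>)
      \<le> ?Q vs * sqrt (\<theta> / real M)" for vs
    unfolding M_def \<mu>_def n_def
    by (rule Y_bound[where a="a vs" and \<theta>=\<theta> and q="outQ PhiU PhiV (length ws) ws vs"])
       (use a0 aB th outQ_nonneg Qsplit \<beta>0 \<mu>0 in \<open>auto simp: \<mu>_def n_def\<close>)
  have "exp_tv PhiU PhiV n R ws = (1/2) * (\<Sum>vs\<in>words n. ?E (\<lambda>C. \<bar>outP PhiV n R C ws vs - ?Q vs\<bar>))"
    unfolding exp_tv_def tv_dist_def by (simp add: Bochner_Integration.integral_sum)
  also have "\<dots> \<le> (1/2) * (\<Sum>vs\<in>words n. ?Q vs * sqrt (\<theta> / real M) + \<beta> vs + \<beta> vs)"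
  proof (intro mult_left_mono sum_mono)
    fix vs
    have "?E (\<lambda>C. \<bar>outP PhiV n R C ws vs - ?Q vs\<bar>) \<le>
      ?E (\<lambda>C. \<bar>(1 / real M) * (\<Sum>j<M. a vs (map (C (ws,j)) [0..<n]) - \<mu> vs)\<bar>
      + (1 / real M) * (\<Sum>j<M. b vs (map (C (ws,j)) [0..<n])) + \<beta> vs)"
      by (intro integral_mono integrable_codebook pw)
    also have "\<dots> = ?E (\<lambda>C. \<bar>(1 / real M) * (\<Sum>j<M. a vs (map (C (ws,j)) [0..<n]) - \<mu> vs)\<bar>)
      + ?E (\<lambda>C. (1 / real M) * (\<Sum>j<M. b vs (map (C (ws,j)) [0..<n]))) + \<beta> vs"
      by (subst Bochner_Integration.integral_add, simp, simp)+ simp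
    also have "\<dots> \<le> ?Q vs * sqrt (\<theta> / real M) + \<beta> vs + \<beta> vs"
      unfolding Eb using EY[of vs] by simp
    finally show "?E (\<lambda>C. \<bar>outP PhiV n R C ws vs - ?Q vs\<bar>) \<le> ?Q vs * sqrt (\<theta> / real M) + \<beta> vs + \<beta> vs" .
  qed simp
  also have "\<dots> = (\<Sum>vs\<in>words n. \<beta> vs) + sqrt (\<theta> / real M) / 2 * (\<Sum>vs\<in>words n. ?Q vs)"
    by (simp add: sum.distrib sum_distrib_left sum_distrib_right algebra_simps)
  also have "(\<Sum>vs\<in>words n. ?Q vs) = 1" using sum_outQ[of PhiU PhiV ws] by (simp add: n_def)
  finally show ?thesis by (simp add: \<beta>_def b_def M_def)
qed



definition ell where "ell PhiU PhiV w a b = ln (pmf (PhiV w a) b) - ln (pmf (chanVW PhiU PhiV w) b)"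
definition pj where "pj PhiU PhiV w a b = pmf (PhiU w) a * pmf (PhiV w a) b"
definition Zw where "Zw PhiU PhiV (lam::real) w =
  (\<Sum>a\<in>UNIV. \<Sum>b\<in>UNIV. if pj PhiU PhiV w a b > 0 then pj PhiU PhiV w a b * exp (lam * ell PhiU PhiV w a b) else 0)"

lemma pj_nonneg: "pj PhiU PhiV w a b \<ge> 0" by (simp add: pj_def)

lemma chan_pos:
  fixes PhiU :: "'w \<Rightarrow> 'u::finite pmf"
  assumes "pj PhiU PhiV w a b > 0"
  shows "pmf (chanVW PhiU PhiV w) b \<ge> pj PhiU PhiV w a b"
proof -
  have "pj PhiU PhiV w a b \<le> (\<Sum>a\<in>UNIV. pmf (PhiU w) a * pmf (PhiV w a) b)"
    unfolding pj_def by (rule member_le_sum) auto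
  thus ?thesis by (simp add: chan_sum)
qed

lemma eta_pointwise:
  fixes PhiU :: "'w::finite \<Rightarrow> 'u::finite pmf" and PhiV :: "'w \<Rightarrow> 'u \<Rightarrow> 'v::finite pmf"
  assumes l0: "lam \<ge> 0"
  shows "PUl PhiU ws us * Bb PhiU PhiV ws (2 powr \<tau>) us vs \<le>
    exp (- lam * \<tau> * ln 2) * (\<Prod>t<length ws. if pj PhiU PhiV (ws!t) (us!t) (vs!t) > 0
        then pj PhiU PhiV (ws!t) (us!t) (vs!t) * exp (lam * ell PhiU PhiV (ws!t) (us!t) (vs!t)) else 0)"
    (is "?L \<le> exp _ * ?P")
proof -
  let ?n = "length ws"
  let ?pj = "\<lambda>t. pj PhiU PhiV (ws!t) (us!t) (vs!t)"
  have P0: "?P \<ge> 0" by (intro prod_nonneg) (auto simp: pj_nonneg)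
  have Bb_le: "Bb PhiU PhiV ws \<theta> us vs \<le> PVl PhiV ws us vs" for \<theta>
    by (simp add: Bb_def Aa_def PVl_nonneg)
  have Bb0: "Bb PhiU PhiV ws \<theta> us vs \<ge> 0" for \<theta>
    by (simp add: Bb_def Aa_def PVl_nonneg)
  have UV: "PUl PhiU ws us * PVl PhiV ws us vs = (\<Prod>t<?n. ?pj t)"
    by (simp add: PUl_def PVl_def pj_def prod.distrib)
  show ?thesis
  proof (cases "\<forall>t<?n. ?pj t > 0")
    case False
    then obtain t where t: "t < ?n" "\<not> ?pj t > 0" by auto
    hence "?pj t = 0" using pj_nonneg[of PhiU PhiV "ws!t" "us!t" "vs!t"] by linarith
    hence "(\<Prod>t<?n. ?pj t) = 0" using t by (intro prod_zero) auto
    hence "?L \<le> 0" using UV mult_left_mono[OF Bb_le PUl_nonneg]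
      by (metis)
    thus ?thesis using P0 by (meson order_trans mult_nonneg_nonneg exp_ge_zero)
  next
    case True
    have ch: "pmf (chanVW PhiU PhiV (ws!t)) (vs!t) > 0" if "t < ?n" for t
      using chan_pos[of PhiU PhiV "ws!t" "us!t" "vs!t"] True that by force
    have pv: "pmf (PhiV (ws!t) (us!t)) (vs!t) > 0" if "t < ?n" for t
      using True that unfolding pj_def by (metis mult_eq_0_iff not_less_iff_gr_or_eq pmf_nonneg order.not_eq_order_implies_strict)
    let ?Q = "outQ PhiU PhiV ?n ws vs"
    have Qpos: "?Q > 0" unfolding outQ_def by (intro prod_pos) (use ch in auto)
    have PVpos: "PVl PhiV ws us vs > 0" unfolding PVl_def by (intro prod_pos) (use pv in auto)
    have sumell: "(\<Sum>t<?n. ell PhiU PhiV (ws!t) (us!t) (vs!t)) = ln (PVl PhiV ws us vs) - ln ?Q"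
    proof -
      have "ln (PVl PhiV ws us vs) = (\<Sum>t<?n. ln (pmf (PhiV (ws!t) (us!t)) (vs!t)))"
        unfolding PVl_def by (rule ln_prod) (use pv in force)+
      moreover have "ln ?Q = (\<Sum>t<?n. ln (pmf (chanVW PhiU PhiV (ws!t)) (vs!t)))"
        unfolding outQ_def by (rule ln_prod) (use ch in force)+
      ultimately show ?thesis unfolding ell_def sum_subtractf by simp
    qed
    have Peq: "?P = PUl PhiU ws us * PVl PhiV ws us vs * exp (lam * (ln (PVl PhiV ws us vs) - ln ?Q))"
    proof -
      have "?P = (\<Prod>t<?n. ?pj t * exp (lam * ell PhiU PhiV (ws!t) (us!t) (vs!t)))"
        using True by (intro prod.cong) auto
      also have "\<dots> = (\<Prod>t<?n. ?pj t) * exp (lam * (\<Sum>t<?n. ell PhiU PhiV (ws!t) (us!t) (vs!t)))"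
        by (simp add: prod.distrib exp_sum sum_distrib_left)
      finally show ?thesis using UV sumell by simp
    qed
    show ?thesis
    proof (cases "Bb PhiU PhiV ws (2 powr \<tau>) us vs = 0")
      case True
      thus ?thesis using P0 by simp
    next
      case False
      hence big: "PVl PhiV ws us vs > 2 powr \<tau> * ?Q"
        and BbE: "Bb PhiU PhiV ws (2 powr \<tau>) us vs = PVl PhiV ws us vs"
        by (auto simp: Bb_def Aa_def split: if_splits)
      have "ln (2 powr \<tau> * ?Q) < ln (PVl PhiV ws us vs)"
        using big Qpos PVpos by (subst ln_less_cancel_iff) auto
      hence "\<tau> * ln 2 < ln (PVl PhiV ws us vs) - ln ?Q"
        using Qpos by (simp add: ln_mult ln_powr)
      hence "1 \<le> exp (lam * (ln (PVl PhiV ws us vs) - ln ?Q) - lam * \<tau> * ln 2)"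
        using l0 by (simp add: right_diff_distrib[symmetric] mult.assoc mult_left_mono)
      hence "PUl PhiU ws us * PVl PhiV ws us vs * 1 \<le>
          PUl PhiU ws us * PVl PhiV ws us vs * exp (lam * (ln (PVl PhiV ws us vs) - ln ?Q) - lam * \<tau> * ln 2)"
        by (intro mult_left_mono mult_nonneg_nonneg PUl_nonneg PVl_nonneg)
      hence f1: "PUl PhiU ws us * PVl PhiV ws us vs \<le>
          PUl PhiU ws us * PVl PhiV ws us vs * exp (lam * (ln (PVl PhiV ws us vs) - ln ?Q) - lam * \<tau> * ln 2)"
        by simp
      moreover have "exp (- lam * \<tau> * ln 2) * (PUl PhiU ws us * PVl PhiV ws us vs * exp (lam * (ln (PVl PhiV ws us vs) - ln ?Q)))
         = PUl PhiU ws us * PVl PhiV ws us vs * exp (lam * (ln (PVl PhiV ws us vs) - ln ?Q) - lam * \<tau> * ln 2)"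
      proof -
        have "exp (- lam * \<tau> * ln 2) * exp (lam * (ln (PVl PhiV ws us vs) - ln ?Q))
           = exp (lam * (ln (PVl PhiV ws us vs) - ln ?Q) - lam * \<tau> * ln 2)"
          by (simp add: mult_exp_exp)
        note h = this
        show ?thesis unfolding h[symmetric] by (simp only: ac_simps)
      qed
      ultimately show ?thesis unfolding Peq BbE by linarith
    qed
  qed
qed



lemma eta_bound:
  fixes PhiU :: "'w::finite \<Rightarrow> 'u::finite pmf" and PhiV :: "'w \<Rightarrow> 'u \<Rightarrow> 'v::finite pmf"
  assumes l0: "lam \<ge> 0"
  shows "(\<Sum>vs\<in>words (length ws). \<Sum>us\<in>words (length ws). PUl PhiU ws us * Bb PhiU PhiV ws (2 powr \<tau>) us vs)
     \<le> exp (- lam * \<tau> * ln 2) * (\<Prod>t<length ws. Zw PhiU PhiV lam (ws!t))"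
proof -
  let ?n = "length ws"
  define G where "G = (\<lambda>t a b. if pj PhiU PhiV (ws!t) a b > 0
        then pj PhiU PhiV (ws!t) a b * exp (lam * ell PhiU PhiV (ws!t) a b) else 0)"
  have "(\<Sum>vs\<in>words ?n. \<Sum>us\<in>words ?n. PUl PhiU ws us * Bb PhiU PhiV ws (2 powr \<tau>) us vs)
     \<le> (\<Sum>vs\<in>words ?n. \<Sum>us\<in>words ?n. exp (- lam * \<tau> * ln 2) * (\<Prod>t<?n. G t (us!t) (vs!t)))"
    unfolding G_def by (intro sum_mono eta_pointwise l0)
  also have "\<dots> = exp (- lam * \<tau> * ln 2) * (\<Sum>us\<in>words ?n. \<Sum>vs\<in>words ?n. \<Prod>t<?n. G t (us!t) (vs!t))"
    by (subst sum.swap) (simp add: sum_distrib_left)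
  also have "(\<Sum>us\<in>words ?n. \<Sum>vs\<in>words ?n. \<Prod>t<?n. G t (us!t) (vs!t))
      = (\<Sum>us\<in>words ?n. \<Prod>t<?n. \<Sum>b\<in>UNIV. G t (us!t) b)"
    by (intro sum.cong refl) (rule sum_words_prod)
  also have "\<dots> = (\<Prod>t<?n. \<Sum>a\<in>UNIV. \<Sum>b\<in>UNIV. G t a b)"
    by (rule sum_words_prod)
  also have "\<dots> = (\<Prod>t<length ws. Zw PhiU PhiV lam (ws!t))"
    by (simp add: G_def Zw_def)
  finally show ?thesis .
qed



definition Lc :: "('w::finite \<Rightarrow> 'u::finite pmf) \<Rightarrow> ('w \<Rightarrow> 'u \<Rightarrow> 'v::finite pmf) \<Rightarrow> real" where
  "Lc PhiU PhiV = 1 + (\<Sum>w\<in>UNIV. \<Sum>a\<in>UNIV. \<Sum>b\<in>UNIV. \<bar>ell PhiU PhiV w a b\<bar>)"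
definition mw where "mw PhiU PhiV w = (\<Sum>a\<in>UNIV. \<Sum>b\<in>UNIV. pj PhiU PhiV w a b * ell PhiU PhiV w a b)"

lemma if_pos_mult: "(p::real) \<ge> 0 \<Longrightarrow> (if p > 0 then p * X else 0) = p * X" by auto

lemma Zw_alt: "Zw PhiU PhiV lam w = (\<Sum>a\<in>UNIV. \<Sum>b\<in>UNIV. pj PhiU PhiV w a b * exp (lam * ell PhiU PhiV w a b))"
  unfolding Zw_def by (simp add: if_pos_mult pj_nonneg)

lemma exp_le_quad:
  fixes x :: real assumes "\<bar>x\<bar> \<le> 1" shows "exp x \<le> 1 + x + x^2"
proof (cases "x \<ge> 0")
  case True thus ?thesis using assms exp_bound by auto
next
  case False
  define y where "y = - x"
  have y: "0 < y" "y \<le> 1" using False assms by (auto simp: y_def)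
  have "exp y \<ge> 1 + y" by (rule exp_ge_add_one_self)
  hence "exp x \<le> 1 / (1 + y)" using y by (simp add: y_def exp_minus field_simps)
  also have "\<dots> \<le> 1 - y + y^2"
  proof -
    have "1 \<le> (1 + y) * (1 - y + y^2)" using y by (simp add: algebra_simps power2_eq_square power3_eq_cube)
    thus ?thesis using y by (simp add: field_simps)
  qed
  finally show ?thesis by (simp add: y_def)
qed

lemma sum_pj:
  fixes PhiU :: "'w \<Rightarrow> 'u::finite pmf" and PhiV :: "'w \<Rightarrow> 'u \<Rightarrow> 'v::finite pmf"
  shows "(\<Sum>a\<in>UNIV. \<Sum>b\<in>UNIV. pj PhiU PhiV w a b) = 1"
  by (simp add: pj_def sum_distrib_left[symmetric] sum_pmf_eq_1)

lemma ell_le_Lc: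
  fixes PhiU :: "'w::finite \<Rightarrow> 'u::finite pmf" and PhiV :: "'w \<Rightarrow> 'u \<Rightarrow> 'v::finite pmf"
  shows "\<bar>ell PhiU PhiV w a b\<bar> \<le> Lc PhiU PhiV"
proof -
  have "\<bar>ell PhiU PhiV w a b\<bar> \<le> (\<Sum>b\<in>UNIV. \<bar>ell PhiU PhiV w a b\<bar>)" by (rule member_le_sum) auto
  also have "\<dots> \<le> (\<Sum>a\<in>UNIV. \<Sum>b\<in>UNIV. \<bar>ell PhiU PhiV w a b\<bar>)"
    by (rule member_le_sum[where f = "\<lambda>a. \<Sum>b\<in>UNIV. \<bar>ell PhiU PhiV w a b\<bar>"]) (auto intro: sum_nonneg)
  also have "\<dots> \<le> (\<Sum>w\<in>UNIV. \<Sum>a\<in>UNIV. \<Sum>b\<in>UNIV. \<bar>ell PhiU PhiV w a b\<bar>)"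
    by (rule member_le_sum[where f = "\<lambda>w. \<Sum>a\<in>UNIV. \<Sum>b\<in>UNIV. \<bar>ell PhiU PhiV w a b\<bar>"]) (auto intro: sum_nonneg)
  finally show ?thesis unfolding Lc_def by simp
qed

lemma Lc_ge1: "Lc PhiU PhiV \<ge> 1"
  unfolding Lc_def by (simp add: sum_nonneg)

lemma mw_bound:
  fixes PhiU :: "'w::finite \<Rightarrow> 'u::finite pmf" and PhiV :: "'w \<Rightarrow> 'u \<Rightarrow> 'v::finite pmf"
  shows "\<bar>mw PhiU PhiV w\<bar> \<le> Lc PhiU PhiV"
proof -
  have "\<bar>mw PhiU PhiV w\<bar> \<le> (\<Sum>a\<in>UNIV. \<Sum>b\<in>UNIV. \<bar>pj PhiU PhiV w a b * ell PhiU PhiV w a b\<bar>)"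
    unfolding mw_def by (rule order_trans[OF sum_abs]) (intro sum_mono sum_abs)
  also have "\<dots> \<le> (\<Sum>a\<in>UNIV. \<Sum>b\<in>UNIV. pj PhiU PhiV w a b * Lc PhiU PhiV)"
    by (intro sum_mono) (auto simp: abs_mult pj_nonneg intro!: mult_left_mono ell_le_Lc)
  also have "\<dots> = Lc PhiU PhiV" by (simp add: sum_distrib_right[symmetric] sum_pj)
  finally show ?thesis .
qed

lemma Zw_bound:
  fixes PhiU :: "'w::finite \<Rightarrow> 'u::finite pmf" and PhiV :: "'w \<Rightarrow> 'u \<Rightarrow> 'v::finite pmf"
  assumes l0: "lam \<ge> 0" and l1: "2 * Lc PhiU PhiV * lam \<le> 1"
  shows "Zw PhiU PhiV lam w \<le> exp (lam * mw PhiU PhiV w + 4 * (Lc PhiU PhiV)^2 * lam^2)"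
proof -
  define L where "L = Lc PhiU PhiV"
  define m where "m = mw PhiU PhiV w"
  define K where "K = 4 * L^2 * lam^2"
  define e where "e = exp (lam * m)"
  let ?p = "pj PhiU PhiV w" and ?l = "ell PhiU PhiV w"
  have pw: "?p a b * exp (lam * ?l a b) \<le> e * (1 + K - lam * m) * ?p a b + (e * lam) * (?p a b * ?l a b)" for a b
  proof -
    define x where "x = lam * (?l a b - m)"
    have "\<bar>?l a b - m\<bar> \<le> 2 * L" using ell_le_Lc[of PhiU PhiV w a b] mw_bound[of PhiU PhiV w]
      unfolding L_def m_def by linarith
    hence xb: "\<bar>x\<bar> \<le> 2 * L * lam" unfolding x_def using l0 by (simp add: abs_mult mult_left_mono mult.commute)
    hence x1: "\<bar>x\<bar> \<le> 1" using l1 unfolding L_def by linarith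
    have "x^2 \<le> (2 * L * lam)^2" using xb by (metis abs_ge_zero order_trans power_mono power2_abs)
    hence x2: "x^2 \<le> K" unfolding K_def by (simp add: power_mult_distrib)
    have "exp (lam * ?l a b) = e * exp x" unfolding e_def x_def by (simp add: mult_exp_exp algebra_simps)
    also have "\<dots> \<le> e * (1 + x + K)"
      using exp_le_quad[OF x1] x2 by (intro mult_left_mono) (auto simp: e_def)
    finally have "?p a b * exp (lam * ?l a b) \<le> ?p a b * (e * (1 + x + K))"
      by (intro mult_left_mono pj_nonneg)
    thus ?thesis by (simp add: x_def algebra_simps)
  qed
  have "Zw PhiU PhiV lam w \<le> (\<Sum>a\<in>UNIV. \<Sum>b\<in>UNIV. e * (1 + K - lam * m) * ?p a b + (e * lam) * (?p a b * ?l a b))"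
    unfolding Zw_alt by (intro sum_mono pw)
  also have "\<dots> = e * (1 + K - lam * m) * (\<Sum>a\<in>UNIV. \<Sum>b\<in>UNIV. ?p a b) + (e * lam) * (\<Sum>a\<in>UNIV. \<Sum>b\<in>UNIV. ?p a b * ?l a b)"
    by (simp add: sum.distrib sum_distrib_left)
  also have "\<dots> = e * (1 + K)" by (simp add: sum_pj m_def mw_def algebra_simps)
  also have "\<dots> \<le> e * exp K" by (intro mult_left_mono) (auto simp: e_def add.commute exp_ge_add_one_self)
  also have "\<dots> = exp (lam * m + K)" by (simp add: e_def exp_add)
  finally show ?thesis by (simp add: K_def L_def m_def)
qed



definition Iw where "Iw PhiU PhiV w = (\<Sum>u\<in>UNIV. \<Sum>v\<in>UNIV.
   if pj PhiU PhiV w u v = 0 then 0 else pj PhiU PhiV w u v * log 2 (pmf (PhiV w u) v / pmf (chanVW PhiU PhiV w) v))"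

lemma condMI_alt:
  fixes PhiU :: "'w::finite \<Rightarrow> 'u::finite pmf" and PhiV :: "'w \<Rightarrow> 'u \<Rightarrow> 'v::finite pmf"
  shows "condMI P PhiU PhiV = (\<Sum>w\<in>UNIV. P w * Iw PhiU PhiV w)"
  unfolding condMI_def Iw_def Let_def
  by (intro sum.cong refl) (auto simp: sum_distrib_left pj_def mult.assoc intro!: sum.cong)

lemma mw_Iw:
  fixes PhiU :: "'w::finite \<Rightarrow> 'u::finite pmf" and PhiV :: "'w \<Rightarrow> 'u \<Rightarrow> 'v::finite pmf"
  shows "mw PhiU PhiV w = ln 2 * Iw PhiU PhiV w"
  unfolding mw_def Iw_def sum_distrib_left
proof (intro sum.cong refl)
  fix a b
  show "pj PhiU PhiV w a b * ell PhiU PhiV w a b =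
     ln 2 * (if pj PhiU PhiV w a b = 0 then 0 else pj PhiU PhiV w a b * log 2 (pmf (PhiV w a) b / pmf (chanVW PhiU PhiV w) b))"
  proof (cases "pj PhiU PhiV w a b = 0")
    case False
    hence p: "pj PhiU PhiV w a b > 0" using pj_nonneg[of PhiU PhiV w a b] by linarith
    have ch: "pmf (chanVW PhiU PhiV w) b > 0" using chan_pos[OF p] p by linarith
    have pv: "pmf (PhiV w a) b > 0" using p unfolding pj_def
      by (metis mult_eq_0_iff not_less_iff_gr_or_eq pmf_nonneg order.not_eq_order_implies_strict)
    have "log 2 (pmf (PhiV w a) b / pmf (chanVW PhiU PhiV w) b) = ell PhiU PhiV w a b / ln 2"
      using ch pv by (simp add: log_def ell_def ln_div)
    thus ?thesis using False by simp
  qed simp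
qed

lemma sum_empdist:
  fixes ws :: "'w::finite list" and f :: "'w \<Rightarrow> real"
  shows "(\<Sum>t<length ws. f (ws!t)) = real (length ws) * (\<Sum>w\<in>UNIV. empdist ws w * f w)"
proof (cases "length ws = 0")
  case True thus ?thesis by simp
next
  case False
  have "(\<Sum>t<length ws. f (ws!t)) = (\<Sum>t<length ws. \<Sum>w\<in>UNIV. if ws!t = w then f w else 0)"
    by simp
  also have "\<dots> = (\<Sum>w\<in>UNIV. \<Sum>t<length ws. if ws!t = w then f w else 0)" by (rule sum.swap)
  also have "\<dots> = (\<Sum>w\<in>UNIV. real (card {t. t < length ws \<and> ws!t = w}) * f w)"
  proof (intro sum.cong refl)
    fix w
    have "(\<Sum>t<length ws. if ws!t = w then f w else 0) = (\<Sum>t\<in>{t. t < length ws \<and> ws!t = w}. f w)"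
    proof -
      have e: "{..<length ws} \<inter> {x. ws!x = w} = {t. t < length ws \<and> ws!t = w}" by auto
      show ?thesis by (simp add: sum.If_cases e)
    qed
    thus "(\<Sum>t<length ws. if ws!t = w then f w else 0) = real (card {t. t < length ws \<and> ws!t = w}) * f w"
      by simp
  qed
  finally show ?thesis using False by (simp add: empdist_def sum_distrib_left)
qed



lemma main_bound:
  fixes PhiU :: "'w::finite \<Rightarrow> 'u::finite pmf" and PhiV :: "'w \<Rightarrow> 'u \<Rightarrow> 'v::finite pmf"
    and ws :: "'w list"
  assumes l0: "lam \<ge> 0" and l1: "2 * Lc PhiU PhiV * lam \<le> 1"
  shows "exp_tv PhiU PhiV (length ws) R ws \<le>
     exp (lam * ln 2 * (real (length ws) * condMI (empdist ws) PhiU PhiV - \<tau>)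
          + real (length ws) * (4 * (Lc PhiU PhiV)^2 * lam^2))
     + sqrt (2 powr \<tau> / real (cbsize (length ws) R)) / 2"
proof -
  let ?n = "length ws"
  define K where "K = 4 * (Lc PhiU PhiV)^2 * lam^2"
  have "exp_tv PhiU PhiV ?n R ws \<le>
     (\<Sum>vs\<in>words ?n. \<Sum>us\<in>words ?n. PUl PhiU ws us * Bb PhiU PhiV ws (2 powr \<tau>) us vs)
     + sqrt (2 powr \<tau> / real (cbsize ?n R)) / 2"
    by (rule TV_bound) simp
  also have "(\<Sum>vs\<in>words ?n. \<Sum>us\<in>words ?n. PUl PhiU ws us * Bb PhiU PhiV ws (2 powr \<tau>) us vs)
     \<le> exp (- lam * \<tau> * ln 2) * (\<Prod>t<?n. Zw PhiU PhiV lam (ws!t))"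
    by (rule eta_bound[OF l0])
  also have "(\<Prod>t<?n. Zw PhiU PhiV lam (ws!t)) \<le> (\<Prod>t<?n. exp (lam * mw PhiU PhiV (ws!t) + K))"
    by (intro prod_mono conjI Zw_bound[OF l0 l1, unfolded K_def[symmetric]])
       (auto simp: Zw_def pj_nonneg intro!: sum_nonneg)
  also have "\<dots> = exp (lam * (\<Sum>t<?n. mw PhiU PhiV (ws!t)) + real ?n * K)"
    by (simp add: exp_sum[symmetric] sum.distrib sum_distrib_left)
  also have "(\<Sum>t<?n. mw PhiU PhiV (ws!t)) = ln 2 * (real ?n * condMI (empdist ws) PhiU PhiV)"
    by (simp add: mw_Iw sum_distrib_left[symmetric] sum_empdist[where ws=ws] condMI_alt)
  finally have "exp_tv PhiU PhiV ?n R ws \<le> exp (- lam * \<tau> * ln 2) *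
       exp (lam * (ln 2 * (real ?n * condMI (empdist ws) PhiU PhiV)) + real ?n * K)
     + sqrt (2 powr \<tau> / real (cbsize ?n R)) / 2"
    by (simp add: mult_left_mono)
  also have "exp (- lam * \<tau> * ln 2) * exp (lam * (ln 2 * (real ?n * condMI (empdist ws) PhiU PhiV)) + real ?n * K)
     = exp (lam * ln 2 * (real ?n * condMI (empdist ws) PhiU PhiV - \<tau>) + real ?n * K)"
    by (simp add: mult_exp_exp algebra_simps)
  finally show ?thesis by (simp add: K_def)
qed



definition lamg where "lamg PhiU PhiV g = min (1 / (2 * Lc PhiU PhiV)) (g * ln 2 / (16 * (Lc PhiU PhiV)^2))"

lemma cor_bound:
  fixes PhiU :: "'w::finite \<Rightarrow> 'u::finite pmf" and PhiV :: "'w \<Rightarrow> 'u \<Rightarrow> 'v::finite pmf"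
    and ws :: "'w list"
  assumes g: "g > 0" and R: "R > condMI (empdist ws) PhiU PhiV + g" and n: "n = length ws"
  shows "exp_tv PhiU PhiV n R ws \<le> exp (- (lamg PhiU PhiV g * real n * g * ln 2 / 4)) + exp (- (real n * g * ln 2 / 4)) / 2"
proof -
  define L where "L = Lc PhiU PhiV"
  define lam where "lam = lamg PhiU PhiV g"
  define I where "I = condMI (empdist ws) PhiU PhiV"
  define \<tau> where "\<tau> = real n * (I + g / 2)"
  have L1: "L \<ge> 1" unfolding L_def by (rule Lc_ge1)
  have l0: "lam \<ge> 0" using g L1 unfolding lam_def lamg_def L_def[symmetric] by auto
  have l1: "2 * L * lam \<le> 1" using L1 unfolding lam_def lamg_def L_def[symmetric]
    by (simp add: min_def field_simps)
  have l2: "lam \<le> g * ln 2 / (16 * L^2)" unfolding lam_def lamg_def L_def[symmetric] by simp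
  have MB: "exp_tv PhiU PhiV n R ws \<le>
     exp (lam * ln 2 * (real n * I - \<tau>) + real n * (4 * L^2 * lam^2))
     + sqrt (2 powr \<tau> / real (cbsize n R)) / 2"
    using main_bound[OF l0 l1[unfolded L_def], of ws R \<tau>] unfolding n I_def L_def by simp
  have e1: "lam * ln 2 * (real n * I - \<tau>) + real n * (4 * L^2 * lam^2) \<le> - (lam * real n * g * ln 2 / 4)"
  proof -
    have "4 * L^2 * lam \<le> g * ln 2 / 4" using l2 L1 by (simp add: field_simps)
    hence "real n * lam * (4 * L^2 * lam) \<le> real n * lam * (g * ln 2 / 4)"
      using l0 by (intro mult_left_mono) auto
    thus ?thesis unfolding \<tau>_def by (simp add: algebra_simps power2_eq_square)
  qed
  have e2: "sqrt (2 powr \<tau> / real (cbsize n R)) \<le> exp (- (real n * g * ln 2 / 4))"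
  proof -
    have M: "real (cbsize n R) \<ge> 2 powr (real n * R)" by (rule cbsize_ge)
    have "2 powr \<tau> / real (cbsize n R) \<le> 2 powr \<tau> / 2 powr (real n * R)"
      using M cbsize_ge1[of n R] by (intro divide_left_mono) auto
    also have "\<dots> = 2 powr (\<tau> - real n * R)" by (simp add: powr_diff)
    also have "\<dots> \<le> 2 powr (- (real n * g / 2))"
    proof -
      have "real n * (I + g) \<le> real n * R" using R unfolding I_def by (intro mult_left_mono) auto
      thus ?thesis unfolding \<tau>_def by (intro powr_mono) (auto simp: algebra_simps)
    qed
    finally have "sqrt (2 powr \<tau> / real (cbsize n R)) \<le> sqrt (2 powr (- (real n * g / 2)))"
      by (rule real_sqrt_le_mono)
    also have "\<dots> = 2 powr (- (real n * g / 2) / 2)" by (simp add: powr_half_sqrt[symmetric] powr_powr)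
    also have "\<dots> = exp (- (real n * g * ln 2 / 4))" by (simp add: powr_def)
    finally show ?thesis .
  qed
  have "exp (lam * ln 2 * (real n * I - \<tau>) + real n * (4 * L^2 * lam^2)) \<le> exp (- (lam * real n * g * ln 2 / 4))"
    using e1 by simp
  thus ?thesis using MB e2 unfolding lam_def[symmetric] by linarith
qed



lemma triv_bound:
  fixes PhiU :: "'w::finite \<Rightarrow> 'u::finite pmf" and PhiV :: "'w \<Rightarrow> 'u \<Rightarrow> 'v::finite pmf"
    and ws :: "'w list"
  assumes "n = length ws"
  shows "exp_tv PhiU PhiV n R ws \<le> 3/2"
proof -
  have "exp_tv PhiU PhiV n R ws \<le> 1 + sqrt (1 / real (cbsize n R)) / 2"
    using main_bound[of 0 PhiU PhiV ws R 0] assms by simp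
  moreover have "sqrt (1 / real (cbsize n R)) \<le> 1"
    using cbsize_ge1[of n R] by simp
  ultimately show ?thesis by linarith
qed

lemma exp_neg_tendsto:
  fixes k :: real and s :: "nat \<Rightarrow> real"
  assumes "k > 0" "filterlim s at_top sequentially"
  shows "(\<lambda>n. exp (- (k * s n))) \<longlonglongrightarrow> 0"
proof -
  have "filterlim (\<lambda>n. k * s n) at_top sequentially"
    by (rule filterlim_tendsto_pos_mult_at_top[OF tendsto_const[of k] assms])
  hence "filterlim (\<lambda>n. - (k * s n)) at_bot sequentially"
    by (simp add: filterlim_uminus_at_top)
  thus ?thesis by (rule filterlim_compose[OF exp_at_bot])
qed

lemma lamg_lower:
  assumes g: "g > 0" and s: "g * sqrt (real n) \<ge> 1"
  shows "lamg PhiU PhiV g * real n * g \<ge> min (1 / (2 * Lc PhiU PhiV)) (ln 2 / (16 * (Lc PhiU PhiV)^2)) * (g * sqrt (real n))"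
proof -
  define L where "L = Lc PhiU PhiV"
  define s where "s = g * sqrt (real n)"
  have L1: "L \<ge> 1" unfolding L_def by (rule Lc_ge1)
  have s1: "s \<ge> 1" using s unfolding s_def .
  have "n \<noteq> 0" using s by (cases n) auto
  hence n1: "real n \<ge> 1" by simp
  have sq: "sqrt (real n) \<ge> 1" using n1 by simp
  have sqq: "sqrt (real n) * sqrt (real n) = real n" by simp
  have ng: "real n * g = sqrt (real n) * s" unfolding s_def
    by (subst sqq[symmetric]) (simp add: algebra_simps)
  have ng1: "real n * g \<ge> s" unfolding ng using mult_right_mono[OF sq, of s] s1 by simp
  have ng2: "g * (real n * g) = s * s" unfolding ng s_def by (simp add: algebra_simps)
  have ss: "s * s \<ge> s" using mult_right_mono[OF s1, of s] s1 by simp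
  have A: "1 / (2 * L) * (real n * g) \<ge> 1 / (2 * L) * s" using ng1 L1 by (intro mult_left_mono) auto
  have B: "g * ln 2 / (16 * L^2) * (real n * g) \<ge> ln 2 / (16 * L^2) * s"
  proof -
    have "g * ln 2 / (16 * L^2) * (real n * g) = ln 2 / (16 * L^2) * (g * (real n * g))" by simp
    also have "\<dots> = ln 2 / (16 * L^2) * (s * s)" by (simp add: ng2)
    also have "\<dots> \<ge> ln 2 / (16 * L^2) * s" using ss L1 by (intro mult_left_mono) auto
    finally show ?thesis .
  qed
  have "lamg PhiU PhiV g * real n * g = min (1 / (2 * L) * (real n * g)) (g * ln 2 / (16 * L^2) * (real n * g))"
    unfolding lamg_def L_def[symmetric] using g n1 by (simp add: min_mult_distrib_right mult.assoc)
  also have "\<dots> \<ge> min (1 / (2 * L) * s) (ln 2 / (16 * L^2) * s)" using A B by linarith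
  also have "min (1 / (2 * L) * s) (ln 2 / (16 * L^2) * s) = min (1 / (2 * L)) (ln 2 / (16 * L^2)) * s"
    using s s_def by (simp add: min_mult_distrib_right)
  finally show ?thesis unfolding L_def s_def .
qed



theorem mainTheorem14:
  fixes PhiU :: "'w::finite \<Rightarrow> 'u::finite pmf"
    and PhiV :: "'w \<Rightarrow> 'u \<Rightarrow> 'v::finite pmf"
    and \<gamma> :: "nat \<Rightarrow> real"
  assumes "filterlim (\<lambda>n. \<gamma> n * sqrt (real n)) at_top sequentially"
  shows "(\<exists>\<epsilon> :: nat \<Rightarrow> real. \<epsilon> \<longlonglongrightarrow> 0 \<and>
           (\<forall>n R ws. ws \<in> words n \<and> R > condMI (empdist ws) PhiU PhiV + \<gamma> n
              \<longrightarrow> exp_tv PhiU PhiV n R ws < \<epsilon> n)) \<and>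
         ((\<exists>g>0. \<forall>n. \<gamma> n = g) \<longrightarrow>
         (\<exists>(\<epsilon> :: nat \<Rightarrow> real) a K. a > 0 \<and> (\<forall>n. \<epsilon> n \<le> K * exp (- a * real n)) \<and>
           (\<forall>n R ws. ws \<in> words n \<and> R > condMI (empdist ws) PhiU PhiV + \<gamma> n
              \<longrightarrow> exp_tv PhiU PhiV n R ws < \<epsilon> n)))"
proof
  define L where "L = Lc PhiU PhiV"
  have L1: "L \<ge> 1" unfolding L_def by (rule Lc_ge1)
  have ln2: "ln (2::real) > 0" by simp
  show "\<exists>\<epsilon> :: nat \<Rightarrow> real. \<epsilon> \<longlonglongrightarrow> 0 \<and>
           (\<forall>n R ws. ws \<in> words n \<and> R > condMI (empdist ws) PhiU PhiV + \<gamma> n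
              \<longrightarrow> exp_tv PhiU PhiV n R ws < \<epsilon> n)"
  proof -
    define \<epsilon> where "\<epsilon> = (\<lambda>n. if \<gamma> n > 0 then exp (- (lamg PhiU PhiV (\<gamma> n) * real n * \<gamma> n * ln 2 / 4))
        + exp (- (real n * \<gamma> n * ln 2 / 4)) else (2::real))"
    define s where "s = (\<lambda>n. \<gamma> n * sqrt (real n))"
    define \<kappa> where "\<kappa> = min (1 / (2 * L)) (ln 2 / (16 * L^2))"
    have \<kappa>0: "\<kappa> > 0" using L1 ln2 unfolding \<kappa>_def by auto
    have bound: "exp_tv PhiU PhiV n R ws < \<epsilon> n"
      if "ws \<in> words n" "R > condMI (empdist ws) PhiU PhiV + \<gamma> n" for n R ws
    proof -
      have n: "n = length ws" using that(1) by (simp add: words_def)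
      show ?thesis
      proof (cases "\<gamma> n > 0")
        case True
        have "exp_tv PhiU PhiV n R ws \<le> exp (- (lamg PhiU PhiV (\<gamma> n) * real n * \<gamma> n * ln 2 / 4))
           + exp (- (real n * \<gamma> n * ln 2 / 4)) / 2"
          by (rule cor_bound[OF True that(2) n])
        also have "\<dots> < \<epsilon> n" using True by (simp add: \<epsilon>_def)
        finally show ?thesis .
      next
        case False
        thus ?thesis using triv_bound[OF n, of PhiU PhiV R] by (simp add: \<epsilon>_def)
      qed
    qed
    have lim: "\<epsilon> \<longlonglongrightarrow> 0"
    proof (rule tendsto_sandwich[where f = "\<lambda>_. 0" and
          h = "\<lambda>n. exp (- ((\<kappa> * ln 2 / 4) * s n)) + exp (- ((ln 2 / 4) * s n))"])
      have ev: "eventually (\<lambda>n. s n \<ge> 1) sequentially"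
        using assms unfolding s_def filterlim_at_top by auto
      show "eventually (\<lambda>n. 0 \<le> \<epsilon> n) sequentially"
        by (intro always_eventually allI) (simp add: \<epsilon>_def)
      show "eventually (\<lambda>n. \<epsilon> n \<le> exp (- ((\<kappa> * ln 2 / 4) * s n)) + exp (- ((ln 2 / 4) * s n))) sequentially"
        using ev
      proof eventually_elim
        case (elim n)
        have "n \<noteq> 0" using elim by (cases n) (auto simp: s_def)
        hence n1: "real n \<ge> 1" by simp
        have sq: "sqrt (real n) \<ge> 0" by simp
        have gp: "\<gamma> n > 0" using elim sq unfolding s_def
          by (smt (verit, best) mult_nonpos_nonneg)
        have sqle: "sqrt (real n) \<le> real n"
        proof -
          have "sqrt (real n) * 1 \<le> sqrt (real n) * sqrt (real n)" using n1 by (intro mult_left_mono) auto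
          thus ?thesis by simp
        qed
        have B: "real n * \<gamma> n \<ge> s n" unfolding s_def using sqle gp
          by (simp add: mult.commute mult_left_mono)
        have A: "lamg PhiU PhiV (\<gamma> n) * real n * \<gamma> n \<ge> \<kappa> * s n"
          using lamg_lower[OF gp, of n PhiU PhiV] elim unfolding \<kappa>_def L_def s_def by simp
        have e1: "exp (- (lamg PhiU PhiV (\<gamma> n) * real n * \<gamma> n * ln 2 / 4)) \<le> exp (- ((\<kappa> * ln 2 / 4) * s n))"
          using A ln2 by (simp add: mult_right_mono)
        have e2: "exp (- (real n * \<gamma> n * ln 2 / 4)) \<le> exp (- ((ln 2 / 4) * s n))"
          using B ln2 by (simp add: mult_right_mono)
        show ?case using gp add_mono[OF e1 e2] unfolding \<epsilon>_def by simp
      qed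
      have sl: "filterlim s at_top sequentially" using assms unfolding s_def .
      show "(\<lambda>n. exp (- ((\<kappa> * ln 2 / 4) * s n)) + exp (- ((ln 2 / 4) * s n))) \<longlonglongrightarrow> 0"
      proof -
        have k1: "\<kappa> * ln 2 / 4 > 0" using \<kappa>0 ln2 by simp
        have k2: "ln 2 / 4 > (0::real)" using ln2 by simp
        show ?thesis using tendsto_add[OF exp_neg_tendsto[OF k1 sl] exp_neg_tendsto[OF k2 sl]] by simp
      qed
    qed simp
    show ?thesis using lim bound by blast
  qed
next
  define L where "L = Lc PhiU PhiV"
  have L1: "L \<ge> 1" unfolding L_def by (rule Lc_ge1)
  have ln2: "ln (2::real) > 0" by simp
  show "(\<exists>g>0. \<forall>n. \<gamma> n = g) \<longrightarrow>
         (\<exists>(\<epsilon> :: nat \<Rightarrow> real) a K. a > 0 \<and> (\<forall>n. \<epsilon> n \<le> K * exp (- a * real n)) \<and>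
           (\<forall>n R ws. ws \<in> words n \<and> R > condMI (empdist ws) PhiU PhiV + \<gamma> n
              \<longrightarrow> exp_tv PhiU PhiV n R ws < \<epsilon> n))"
  proof
    assume "\<exists>g>0. \<forall>n. \<gamma> n = g"
    then obtain g where g: "g > 0" and gn: "\<And>n. \<gamma> n = g" by auto
    define lam where "lam = lamg PhiU PhiV g"
    define a where "a = lam * g * ln 2 / 4"
    have lam0: "lam > 0" using g L1 ln2 unfolding lam_def lamg_def L_def[symmetric] by auto
    have lam1: "lam \<le> 1"
    proof -
      have "lam \<le> 1 / (2 * L)" unfolding lam_def lamg_def L_def[symmetric] by simp
      also have "\<dots> \<le> 1" using L1 by simp
      finally show ?thesis .
    qed
    have a0: "a > 0" using lam0 g ln2 unfolding a_def by simp
    have ale: "a \<le> g * ln 2 / 4" using lam1 g ln2 unfolding a_def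
      by (simp add: mult_le_cancel_right1 field_simps)
    define \<epsilon> where "\<epsilon> = (\<lambda>n::nat. 2 * exp (- a * real n))"
    have bound: "exp_tv PhiU PhiV n R ws < \<epsilon> n"
      if "ws \<in> words n" "R > condMI (empdist ws) PhiU PhiV + \<gamma> n" for n R ws
    proof -
      have n: "n = length ws" using that(1) by (simp add: words_def)
      have "exp_tv PhiU PhiV n R ws \<le> exp (- (lam * real n * g * ln 2 / 4)) + exp (- (real n * g * ln 2 / 4)) / 2"
        unfolding lam_def by (rule cor_bound[OF g _ n]) (use that(2) gn in simp)
      also have "exp (- (lam * real n * g * ln 2 / 4)) = exp (- a * real n)" unfolding a_def by (simp add: algebra_simps)
      also have "exp (- (real n * g * ln 2 / 4)) \<le> exp (- a * real n)"
      proof -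
        have "a * real n \<le> g * ln 2 / 4 * real n" using ale by (intro mult_right_mono) auto
        thus ?thesis by (simp add: algebra_simps)
      qed
      finally have "exp_tv PhiU PhiV n R ws \<le> exp (- a * real n) + exp (- a * real n) / 2" by simp
      moreover have "exp (- a * real n) > 0" by simp
      ultimately show ?thesis unfolding \<epsilon>_def by linarith
    qed
    show "\<exists>(\<epsilon> :: nat \<Rightarrow> real) a K. a > 0 \<and> (\<forall>n. \<epsilon> n \<le> K * exp (- a * real n)) \<and>
           (\<forall>n R ws. ws \<in> words n \<and> R > condMI (empdist ws) PhiU PhiV + \<gamma> n
              \<longrightarrow> exp_tv PhiU PhiV n R ws < \<epsilon> n)"
      using a0 bound by (intro exI[of _ \<epsilon>] exI[of _ a] exI[of _ 2]) (auto simp: \<epsilon>_def)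
  qed
qed


end
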